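(* Let $K=3$. For generic $H\in\mathbb{C}^{3\times 3}$ (that is, for all $H$ outside the zero set of some nonzero polynomial in the entries of $H$), there exist diagonal matrices $D_1,D_2,D_3\in\mathbb{C}^{3\times 3}$ such that, with $B := HD_2 + HD_3H^TD_1H$, the following hold for each $i\in\{1,2,3\}$: (i) $\dfrac{B_{ij}}{H_{ij}} = \dfrac{B_{ij'}}{H_{ij'}}$ for all $j,j'\neq i$; (ii) $\dfrac{B_{ii}}{H_{ii}} \neq \dfrac{B_{ij}}{H_{ij}}$ for all $j\neq i$.
   Context: Setting: a 3-user interference channel with forward channel matrix $H$ ($H_{ij}$ is the gain from source $s_j$ to destination $t_i$) and reciprocal feedback channel $G=H^T$, using a three-phase scheme: destinations receive $y=Hx$ in phase 1, sources receive $H^TD_1y$ in phase 2, and destinations receive $Bx$ in phase 3 (noise ignored), with diagonal coding matrices $D_1,D_2,D_3$. Condition (i) (interference alignment) and (ii) (desired signal preserved) allow each destination to cancel all interference by a linear combination of its phase-1 and phase-3 observations. *)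

theory Defs
  imports "HOL-Analysis.Analysis" "HOL-Library.Numeral_Type"
begin

definition is_diag_mat :: "'a::zero^'n^'n \<Rightarrow> bool" where
  "is_diag_mat D \<longleftrightarrow> (\<forall>i j. i \<noteq> j \<longrightarrow> D$i$j = 0)"

text \<open>Polynomials in the entries of an n x n complex matrix: a finitely supported
  coefficient function on exponent vectors (one exponent per entry).\<close>
definition is_mpoly :: "(('n \<times> 'n \<Rightarrow> nat) \<Rightarrow> complex) \<Rightarrow> bool" where
  "is_mpoly c \<longleftrightarrow> finite {e. c e \<noteq> 0}"

definition mpoly_nonzero :: "(('n \<times> 'n \<Rightarrow> nat) \<Rightarrow> complex) \<Rightarrow> bool" where
  "mpoly_nonzero c \<longleftrightarrow> (\<exists>e. c e \<noteq> 0)"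

definition mpoly_eval :: "(('n::finite \<times> 'n \<Rightarrow> nat) \<Rightarrow> complex) \<Rightarrow> complex^'n^'n \<Rightarrow> complex" where
  "mpoly_eval c H = (\<Sum>e\<in>{e. c e \<noteq> 0}. c e * (\<Prod>p\<in>UNIV. (H $ fst p $ snd p) ^ e p))"

end

theory Submission
  imports Defs
begin


definition mon :: "('n::finite \<times> 'n \<Rightarrow> nat) \<Rightarrow> complex^'n^'n \<Rightarrow> complex" where
  "mon e H = (\<Prod>p\<in>UNIV. (H $ fst p $ snd p) ^ e p)"

definition polyfun :: "(complex^'n::finite^'n \<Rightarrow> complex) \<Rightarrow> bool" where
  "polyfun f \<longleftrightarrow> (\<exists>c. is_mpoly c \<and> (\<forall>H. mpoly_eval c H = f H))"

lemma eval_superset: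
  assumes "finite S" "{e. c e \<noteq> 0} \<subseteq> S"
  shows "mpoly_eval c H = (\<Sum>e\<in>S. c e * mon e H)"
  unfolding mpoly_eval_def mon_def
  by (rule sum.mono_neutral_left[OF assms]) auto

lemma polyfun_const: "polyfun (\<lambda>H. k)"
proof -
  define e0 where "e0 = (\<lambda>_::('a\<times>'a). 0::nat)"
  define c where "c = (\<lambda>e. if e = e0 then k else 0)"
  have m: "mon e0 H = 1" for H unfolding mon_def e0_def by simp
  have s: "{e. c e \<noteq> 0} \<subseteq> {e0}" unfolding c_def by auto
  have "mpoly_eval c H = k" for H
    using eval_superset[OF _ s, of H] m by (simp add: c_def)
  moreover have "is_mpoly c"
    unfolding is_mpoly_def using s finite_subset by blast
  ultimately show ?thesis unfolding polyfun_def by blast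
qed

lemma polyfun_var: "polyfun (\<lambda>H. H$i$j)"
proof -
  define e0 where "e0 = (\<lambda>p. if p = (i,j) then 1 else (0::nat))"
  define c where "c = (\<lambda>e. if e = e0 then (1::complex) else 0)"
  have m: "mon e0 H = H$i$j" for H
  proof -
    have "mon e0 H = (\<Prod>p\<in>UNIV. if p = (i,j) then H $ fst p $ snd p else 1)"
      unfolding mon_def e0_def by (rule prod.cong) auto
    also have "\<dots> = H$i$j" by (subst prod.delta) auto
    finally show ?thesis .
  qed
  have s: "{e. c e \<noteq> 0} \<subseteq> {e0}" unfolding c_def by auto
  have "mpoly_eval c H = H$i$j" for H
    using eval_superset[OF _ s, of H] m by (simp add: c_def)
  moreover have "is_mpoly c"
    unfolding is_mpoly_def using s finite_subset by blast
  ultimately show ?thesis unfolding polyfun_def by blast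
qed

lemma polyfun_add:
  assumes "polyfun f" "polyfun g" shows "polyfun (\<lambda>H. f H + g H)"
proof -
  obtain c d where c: "is_mpoly c" "\<And>H. mpoly_eval c H = f H"
    and d: "is_mpoly d" "\<And>H. mpoly_eval d H = g H"
    using assms unfolding polyfun_def by blast
  define S where "S = {e. c e \<noteq> 0} \<union> {e. d e \<noteq> 0}"
  have fin: "finite S" using c d unfolding is_mpoly_def S_def by auto
  have "mpoly_eval (\<lambda>e. c e + d e) H = f H + g H" for H
  proof -
    have "mpoly_eval (\<lambda>e. c e + d e) H = (\<Sum>e\<in>S. (c e + d e) * mon e H)"
      by (rule eval_superset[OF fin]) (auto simp: S_def)
    also have "\<dots> = (\<Sum>e\<in>S. c e * mon e H) + (\<Sum>e\<in>S. d e * mon e H)"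
      by (simp add: distrib_right sum.distrib)
    also have "(\<Sum>e\<in>S. c e * mon e H) = f H"
      using eval_superset[OF fin, of c H] c(2) by (auto simp: S_def)
    also have "(\<Sum>e\<in>S. d e * mon e H) = g H"
      using eval_superset[OF fin, of d H] d(2) by (auto simp: S_def)
    finally show ?thesis .
  qed
  moreover have "is_mpoly (\<lambda>e. c e + d e)"
    unfolding is_mpoly_def by (rule finite_subset[OF _ fin]) (auto simp: S_def)
  ultimately show ?thesis unfolding polyfun_def by blast
qed

lemma polyfun_neg:
  assumes "polyfun f" shows "polyfun (\<lambda>H. - f H)"
proof -
  obtain c where c: "is_mpoly c" "\<And>H. mpoly_eval c H = f H"
    using assms unfolding polyfun_def by blast
  define S where "S = {e. c e \<noteq> 0}"
  have fin: "finite S" using c unfolding is_mpoly_def S_def by auto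
  have "mpoly_eval (\<lambda>e. - c e) H = - f H" for H
  proof -
    have "mpoly_eval (\<lambda>e. - c e) H = (\<Sum>e\<in>S. (- c e) * mon e H)"
      by (rule eval_superset[OF fin]) (auto simp: S_def)
    also have "\<dots> = - (\<Sum>e\<in>S. c e * mon e H)"
      by (simp add: sum_negf)
    also have "(\<Sum>e\<in>S. c e * mon e H) = f H"
      using eval_superset[OF fin, of c H] c(2) by (auto simp: S_def)
    finally show ?thesis .
  qed
  moreover have "is_mpoly (\<lambda>e. - c e)"
    unfolding is_mpoly_def by (rule finite_subset[OF _ fin]) (auto simp: S_def)
  ultimately show ?thesis unfolding polyfun_def by blast
qed

lemma polyfun_diff:
  assumes "polyfun f" "polyfun g" shows "polyfun (\<lambda>H. f H - g H)"
  using polyfun_add[OF assms(1) polyfun_neg[OF assms(2)]] by simp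

lemma mon_add: "mon (\<lambda>q. e1 q + e2 q) H = mon e1 H * mon e2 H"
  unfolding mon_def by (simp add: power_add prod.distrib)

lemma polyfun_mult:
  assumes "polyfun f" "polyfun g" shows "polyfun (\<lambda>H. f H * g H)"
proof -
  obtain c d where c: "is_mpoly c" "\<And>H. mpoly_eval c H = f H"
    and d: "is_mpoly d" "\<And>H. mpoly_eval d H = g H"
    using assms unfolding polyfun_def by blast
  define Sc where "Sc = {e. c e \<noteq> 0}"
  define Sd where "Sd = {e. d e \<noteq> 0}"
  have fc: "finite Sc" and fd: "finite Sd" using c d unfolding is_mpoly_def Sc_def Sd_def by auto
  define pl where "pl = (\<lambda>p::(('a\<times>'a\<Rightarrow>nat)\<times>('a\<times>'a\<Rightarrow>nat)). (\<lambda>q. fst p q + snd p q))"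
  define T where "T = pl ` (Sc \<times> Sd)"
  have fT: "finite T" unfolding T_def using fc fd by auto
  define h where "h = (\<lambda>e. \<Sum>p\<in>{p\<in>Sc \<times> Sd. pl p = e}. c (fst p) * d (snd p))"
  have supp: "{e. h e \<noteq> 0} \<subseteq> T"
  proof
    fix e assume e: "e \<in> {e. h e \<noteq> 0}"
    show "e \<in> T"
    proof (rule ccontr)
      assume "e \<notin> T"
      then have "{p\<in>Sc \<times> Sd. pl p = e} = {}" unfolding T_def by blast
      then have "h e = 0" unfolding h_def by (simp only: sum.empty)
      with e show False by simp
    qed
  qed
  have "mpoly_eval h H = f H * g H" for H
  proof -
    have "mpoly_eval h H = (\<Sum>e\<in>T. h e * mon e H)" by (rule eval_superset[OF fT supp])
    also have "\<dots> = (\<Sum>e\<in>T. \<Sum>p\<in>{p\<in>Sc \<times> Sd. pl p = e}. c (fst p) * d (snd p) * mon (pl p) H)"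
      unfolding h_def sum_distrib_right by (rule sum.cong) auto
    also have "\<dots> = (\<Sum>p\<in>Sc \<times> Sd. c (fst p) * d (snd p) * mon (pl p) H)"
      by (rule sum.group) (use fc fd in \<open>auto simp: T_def\<close>)
    also have "\<dots> = (\<Sum>e1\<in>Sc. \<Sum>e2\<in>Sd. (c e1 * mon e1 H) * (d e2 * mon e2 H))"
      unfolding sum.cartesian_product pl_def by (rule sum.cong) (auto simp: mon_add mult_ac)
    also have "\<dots> = (\<Sum>e1\<in>Sc. c e1 * mon e1 H) * (\<Sum>e2\<in>Sd. d e2 * mon e2 H)"
      by (simp add: sum_product)
    also have "(\<Sum>e1\<in>Sc. c e1 * mon e1 H) = f H"
      using eval_superset[OF fc, of c H] c(2) by (auto simp: Sc_def)
    also have "(\<Sum>e2\<in>Sd. d e2 * mon e2 H) = g H"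
      using eval_superset[OF fd, of d H] d(2) by (auto simp: Sd_def)
    finally show ?thesis .
  qed
  moreover have "is_mpoly h"
    unfolding is_mpoly_def by (rule finite_subset[OF supp fT])
  ultimately show ?thesis unfolding polyfun_def by blast
qed

lemma polyfun_nonzero:
  assumes "is_mpoly c" "mpoly_eval c H \<noteq> 0" shows "mpoly_nonzero c"
proof (rule ccontr)
  assume "\<not> mpoly_nonzero c"
  then have "{e. c e \<noteq> 0} = {}" unfolding mpoly_nonzero_def by auto
  then show False using assms(2) by (simp add: mpoly_eval_def)
qed



definition diagm :: "complex^3 \<Rightarrow> complex^3^3" where
  "diagm v = (\<chi> i j. if i = j then v$i else 0)"

lemma diagm_diag: "is_diag_mat (diagm v)"
  unfolding is_diag_mat_def diagm_def by simp

lemma B_entry: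
  fixes H :: "complex^3^3"
  shows "(H ** diagm d2 + H ** diagm d3 ** transpose H ** diagm (vector[1,0,0]) ** H)$i$j
    = H$i$j * d2$j + (\<Sum>k\<in>UNIV. H$i$k * d3$k * H$1$k) * H$1$j"
  apply (simp add: matrix_matrix_mult_def transpose_def diagm_def sum_3 algebra_simps)
  using exhaust_3[of j] by blast

definition gen :: "complex^3^3 \<Rightarrow> complex" where
  "gen H = H$1$1 * H$1$2 * H$1$3 * H$2$1 * H$2$2 * H$2$3 * H$3$1 * H$3$2 * H$3$3 *
    (H$1$1 * H$2$2 * H$3$3 + H$1$2 * H$2$3 * H$3$1 + H$1$3 * H$2$1 * H$3$2 -
     H$1$1 * H$2$3 * H$3$2 - H$1$2 * H$2$1 * H$3$3 - H$1$3 * H$2$2 * H$3$1) *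
    (H$1$3 * H$2$1 - H$1$1 * H$2$3) * (H$1$2 * H$3$1 - H$1$1 * H$3$2) *
    (H$1$2 * H$2$3 - H$1$3 * H$2$2) * (H$1$3 * H$3$2 - H$1$2 * H$3$3)"

lemma polyfun_gen: "polyfun gen"
  unfolding gen_def
  by (intro polyfun_mult polyfun_diff polyfun_add polyfun_var)

lemma gen_H0: "gen (vector[vector[1,2,3], vector[4,5,7], vector[11,13,17]]) \<noteq> 0"
  by (simp add: gen_def)

lemma main:
  fixes H :: "complex^3^3"
  assumes "gen H \<noteq> 0"
  shows "\<exists>D1 D2 D3 :: complex^3^3. is_diag_mat D1 \<and> is_diag_mat D2 \<and> is_diag_mat D3 \<and>
           (let B = H ** D2 + H ** D3 ** transpose H ** D1 ** H in
            \<forall>i. (\<forall>j j'. j \<noteq> i \<longrightarrow> j' \<noteq> i \<longrightarrow> B$i$j / H$i$j = B$i$j' / H$i$j') \<and>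
                (\<forall>j. j \<noteq> i \<longrightarrow> B$i$i / H$i$i \<noteq> B$i$j / H$i$j))"
proof -
  have nz: "H$1$1 \<noteq> 0" "H$1$2 \<noteq> 0" "H$1$3 \<noteq> 0" "H$2$1 \<noteq> 0" "H$2$2 \<noteq> 0" "H$2$3 \<noteq> 0"
     "H$3$1 \<noteq> 0" "H$3$2 \<noteq> 0" "H$3$3 \<noteq> 0"
    and dt: "det H \<noteq> 0"
    and m1: "H$1$3 * H$2$1 - H$1$1 * H$2$3 \<noteq> 0"
    and m2: "H$1$2 * H$3$1 - H$1$1 * H$3$2 \<noteq> 0"
    and m3: "H$1$2 * H$2$3 - H$1$3 * H$2$2 \<noteq> 0"
    and m4: "H$1$3 * H$3$2 - H$1$2 * H$3$3 \<noteq> 0"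
    using assms unfolding gen_def det_3 by auto
  define P where "P = H$1$3 / H$2$3 - H$1$1 / H$2$1"
  define Q where "Q = H$1$2 / H$3$2 - H$1$1 / H$3$1"
  have P0: "P \<noteq> 0" unfolding P_def using nz m1 by (auto simp: field_simps)
  have Q0: "Q \<noteq> 0" unfolding Q_def using nz m2 by (auto simp: field_simps)
  define s :: "complex^3" where "s = vector[0, Q, P]"
  obtain Hi where Hi: "H ** Hi = mat 1"
    using dt invertible_det_nz[of H] unfolding invertible_def by blast
  define y where "y = Hi *v s"
  have Hy: "H *v y = s" unfolding y_def
    by (simp add: matrix_vector_mul_assoc Hi)
  define d3 :: "complex^3" where "d3 = (\<chi> k. y$k / H$1$k)"
  have sum_eq: "(\<Sum>k\<in>UNIV. H$i$k * d3$k * H$1$k) = s$i" for i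
  proof -
    have "(\<Sum>k\<in>UNIV. H$i$k * d3$k * H$1$k) = (\<Sum>k\<in>UNIV. H$i$k * y$k)"
      using nz exhaust_3 unfolding d3_def by (intro sum.cong) (auto, metis)
    also have "\<dots> = s$i" using Hy by (simp add: matrix_vector_mult_def vec_eq_iff)
    finally show ?thesis .
  qed
  define d2 :: "complex^3" where "d2 = vector[P*Q, 0, 0]"
  define B where "B = H ** diagm d2 + H ** diagm d3 ** transpose H ** diagm (vector[1,0,0]) ** H"
  have Bij: "B$i$j = H$i$j * d2$j + s$i * H$1$j" for i j
    unfolding B_def B_entry sum_eq ..
  have "\<forall>i. (\<forall>j j'. j \<noteq> i \<longrightarrow> j' \<noteq> i \<longrightarrow> B$i$j / H$i$j = B$i$j' / H$i$j') \<and>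
                (\<forall>j. j \<noteq> i \<longrightarrow> B$i$i / H$i$i \<noteq> B$i$j / H$i$j)"
  proof -
    have r: "B$i$j / H$i$j = d2$j + s$i * H$1$j / H$i$j" for i j
    proof -
      have "H$i$j \<noteq> 0" using nz exhaust_3[of i] exhaust_3[of j] by auto
      then show ?thesis unfolding Bij by (simp add: field_simps)
    qed
    have e1: "P * Q + Q * H$1$1 / H$2$1 = Q * H$1$3 / H$2$3"
      unfolding P_def using nz by (simp add: field_simps)
    have e2: "P * Q + P * H$1$1 / H$3$1 = P * H$1$2 / H$3$2"
      unfolding Q_def using nz by (simp add: field_simps)
    have n1: "Q * H$1$2 / H$2$2 \<noteq> Q * H$1$3 / H$2$3"
      using nz m3 Q0 by (simp add: field_simps)
    have n2: "P * H$1$3 / H$3$3 \<noteq> P * H$1$2 / H$3$2"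
      using nz m4 P0 by (simp add: field_simps)
    have n3: "P * Q \<noteq> 0" using P0 Q0 by simp
    have sv: "s$1 = 0" "s$2 = Q" "s$3 = P" "d2$1 = P*Q" "d2$2 = 0" "d2$3 = 0"
      unfolding s_def d2_def by simp_all
    have R: "B$1$1/H$1$1 = P*Q" "B$1$2/H$1$2 = 0" "B$1$3/H$1$3 = 0"
      "B$2$1/H$2$1 = Q*H$1$3/H$2$3" "B$2$2/H$2$2 = Q*H$1$2/H$2$2" "B$2$3/H$2$3 = Q*H$1$3/H$2$3"
      "B$3$1/H$3$1 = P*H$1$2/H$3$2" "B$3$2/H$3$2 = P*H$1$2/H$3$2" "B$3$3/H$3$3 = P*H$1$3/H$3$3"
      unfolding r sv using e1 e2 by simp_all
    show ?thesis unfolding forall_3 R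
      using n1 n2 n3 by simp
  qed
  note fin = this
  show ?thesis
  proof (rule exI[of _ "diagm (vector[1,0,0])"], rule exI[of _ "diagm d2"], rule exI[of _ "diagm d3"], intro conjI)
    show "is_diag_mat (diagm (vector[1,0,0]))" by (rule diagm_diag)
    show "is_diag_mat (diagm d2)" by (rule diagm_diag)
    show "is_diag_mat (diagm d3)" by (rule diagm_diag)
    show "let B = H ** diagm d2 + H ** diagm d3 ** transpose H ** diagm (vector[1,0,0]) ** H in
            \<forall>i. (\<forall>j j'. j \<noteq> i \<longrightarrow> j' \<noteq> i \<longrightarrow> B$i$j / H$i$j = B$i$j' / H$i$j') \<and>
                (\<forall>j. j \<noteq> i \<longrightarrow> B$i$i / H$i$i \<noteq> B$i$j / H$i$j)"
      unfolding Let_def B_def[symmetric] by (rule fin)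
  qed
qed


theorem theorem3:
  "\<exists>c :: (3 \<times> 3 \<Rightarrow> nat) \<Rightarrow> complex. is_mpoly c \<and> mpoly_nonzero c \<and>
     (\<forall>H :: complex^3^3. mpoly_eval c H \<noteq> 0 \<longrightarrow>
        (\<exists>D1 D2 D3 :: complex^3^3. is_diag_mat D1 \<and> is_diag_mat D2 \<and> is_diag_mat D3 \<and>
           (let B = H ** D2 + H ** D3 ** transpose H ** D1 ** H in
            \<forall>i. (\<forall>j j'. j \<noteq> i \<longrightarrow> j' \<noteq> i \<longrightarrow> B$i$j / H$i$j = B$i$j' / H$i$j') \<and>
                (\<forall>j. j \<noteq> i \<longrightarrow> B$i$i / H$i$i \<noteq> B$i$j / H$i$j))))"
proof -
  obtain c where c: "is_mpoly c" "\<And>H. mpoly_eval c H = gen H"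
    using polyfun_gen unfolding polyfun_def by blast
  have "mpoly_eval c (vector[vector[1,2,3], vector[4,5,7], vector[11,13,17]]) \<noteq> 0"
    unfolding c(2) by (rule gen_H0)
  then have nzc: "mpoly_nonzero c" by (rule polyfun_nonzero[OF c(1)])
  show ?thesis
  proof (intro exI[of _ c] conjI allI impI)
    show "is_mpoly c" by (rule c(1))
    show "mpoly_nonzero c" by fact
    fix H :: "complex^3^3"
    assume "mpoly_eval c H \<noteq> 0"
    then have "gen H \<noteq> 0" using c(2) by simp
    from main[OF this] show "\<exists>D1 D2 D3 :: complex^3^3. is_diag_mat D1 \<and> is_diag_mat D2 \<and> is_diag_mat D3 \<and>
           (let B = H ** D2 + H ** D3 ** transpose H ** D1 ** H in
            \<forall>i. (\<forall>j j'. j \<noteq> i \<longrightarrow> j' \<noteq> i \<longrightarrow> B$i$j / H$i$j = B$i$j' / H$i$j') \<and>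
                (\<forall>j. j \<noteq> i \<longrightarrow> B$i$i / H$i$i \<noteq> B$i$j / H$i$j))" .
  qed
qed

end
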